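(* Let $d\geqslant1$, let $u_1,\dots,u_d\in\mathbb{Z}^d$ satisfy no nontrivial $\mathbb{Z}$-linear relation, let $\mathcal{L}=\mathbb{Z}u_1+\dots+\mathbb{Z}u_d$ and $P=\mathbb{N}u_1+\dots+\mathbb{N}u_d$. Then: (1) A subset $M\subseteq\mathbb{Z}^d$ is a complement of $P$ in $\mathbb{Z}^d$ if and only if for every coset $c$ of $\mathcal{L}$ in $\mathbb{Z}^d$ and every real number $N$ there exists $x\in M\cap c$ all of whose coordinates with respect to $u_1,\dots,u_d$ are $\leqslant N$. (2) $P$ has complements in $\mathbb{Z}^d$. (3) $P$ has no minimal complement in $\mathbb{Z}^d$. (4) No complement of $P$ in $\mathbb{Z}^d$ contains a minimal complement of $P$.
   Context: $\mathbb{N}=\{0,1,2,\dots\}$. Since $u_1,\dots,u_d$ form a $\mathbb{Q}$-basis of $\mathbb{Q}^d$, each $x\in\mathbb{Z}^d$ can be written uniquely as $x=t_1u_1+\dots+t_du_d$ with $t_i\in\mathbb{Q}$; the $t_i$ are its coordinates with respect to $u_1,\dots,u_d$. A nonempty set $M$ is a complement of $W$ in $\mathbb{Z}^d$ if $W+M=\mathbb{Z}^d$; it is minimal if no proper subset of $M$ is a complement of $W$. *)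

theory Defs
  imports "HOL-Analysis.Analysis"
begin

text \<open>Z^d is modelled as int ^ 'n (d = CARD('n) >= 1, arbitrary).\<close>

definition sumset :: "'a::plus set \<Rightarrow> 'a set \<Rightarrow> 'a set" where
  "sumset A B = {a + b | a b. a \<in> A \<and> b \<in> B}"

definition is_complement :: "(int ^ 'n) set \<Rightarrow> (int ^ 'n) set \<Rightarrow> bool" where
  "is_complement W M \<longleftrightarrow> M \<noteq> {} \<and> sumset W M = UNIV"

definition minimal_complement :: "(int ^ 'n) set \<Rightarrow> (int ^ 'n) set \<Rightarrow> bool" where
  "minimal_complement W M \<longleftrightarrow> is_complement W M \<and> (\<forall>M'. M' \<subset> M \<longrightarrow> \<not> is_complement W M')"

definition Z_independent :: "('n::finite \<Rightarrow> int ^ 'n) \<Rightarrow> bool" where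
  "Z_independent u \<longleftrightarrow> (\<forall>c :: 'n \<Rightarrow> int. (\<Sum>i\<in>UNIV. c i *s u i) = 0 \<longrightarrow> (\<forall>i. c i = 0))"

definition Z_span :: "('n::finite \<Rightarrow> int ^ 'n) \<Rightarrow> (int ^ 'n) set" where
  "Z_span u = {(\<Sum>i\<in>UNIV. c i *s u i) | c :: 'n \<Rightarrow> int. True}"

definition N_span :: "('n::finite \<Rightarrow> int ^ 'n) \<Rightarrow> (int ^ 'n) set" where
  "N_span u = {(\<Sum>i\<in>UNIV. int (c i) *s u i) | c :: 'n \<Rightarrow> nat. True}"

definition rat_vec :: "int ^ 'n \<Rightarrow> rat ^ 'n" where
  "rat_vec x = (\<chi> j. of_int (x $ j))"

definition is_coords :: "('n::finite \<Rightarrow> int ^ 'n) \<Rightarrow> int ^ 'n \<Rightarrow> ('n \<Rightarrow> rat) \<Rightarrow> bool" where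
  "is_coords u x t \<longleftrightarrow> (\<Sum>i\<in>UNIV. t i *s rat_vec (u i)) = rat_vec x"

end

theory Submission
  imports Defs
begin

definition Amat :: "('n::finite \<Rightarrow> int ^ 'n) \<Rightarrow> rat ^ 'n ^ 'n" where
  "Amat u = (\<chi> j i. of_int (u i $ j))"

lemma Amat_mult: "Amat u *v t = (\<Sum>i\<in>UNIV. t $ i *s rat_vec (u i))"
  by (simp add: vec_eq_iff Amat_def matrix_vector_mult_def rat_vec_def sum_component mult.commute)

lemma rat_vec_inj: "rat_vec x = rat_vec y \<Longrightarrow> x = y"
  by (simp add: rat_vec_def vec_eq_iff)

lemma rat_vec_add: "rat_vec (x + y) = rat_vec x + rat_vec y"
  by (simp add: rat_vec_def vec_eq_iff)
lemma rat_vec_diff: "rat_vec (x - y) = rat_vec x - rat_vec y"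
  by (simp add: rat_vec_def vec_eq_iff)
lemma rat_vec_scale: "rat_vec (c *s x) = of_int c *s rat_vec x"
  by (simp add: rat_vec_def vec_eq_iff)
lemma rat_vec_zero: "rat_vec 0 = 0"
  by (simp add: rat_vec_def vec_eq_iff)
lemma rat_vec_sum: "rat_vec (\<Sum>i\<in>A. f i) = (\<Sum>i\<in>A. rat_vec (f i))"
  by (induction A rule: infinite_finite_induct) (auto simp: rat_vec_add rat_vec_zero)

lemma Q_indep:
  fixes u :: "'n::finite \<Rightarrow> int ^ 'n"
  assumes "Z_independent u" and "(\<Sum>i\<in>UNIV. t i *s rat_vec (u i)) = 0"
  shows "t = (\<lambda>_. 0)"
proof -
  define D where "D = (\<Prod>i\<in>UNIV. snd (quotient_of (t i)))"
  have Dpos: "D > 0" unfolding D_def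
    by (intro prod_pos) (simp add: quotient_of_denom_pos')
  have "\<exists>c. of_int c = of_int D * t i" for i
  proof -
    obtain a b where q: "quotient_of (t i) = (a, b)" by (cases "quotient_of (t i)")
    have ti: "t i = of_int a / of_int b" and b: "b > 0"
      using quotient_of_div[OF q] quotient_of_denom_pos[OF q] by auto
    have "b dvd D" unfolding D_def using q
      by (metis UNIV_I dvd_prodI finite snd_conv)
    then obtain k where "D = b * k" by blast
    then show ?thesis using b by (intro exI[of _ "a * k"]) (simp add: ti)
  qed
  then obtain c where c: "\<And>i. of_int (c i) = of_int D * t i" by metis
  have "rat_vec (\<Sum>i\<in>UNIV. c i *s u i) = (\<Sum>i\<in>UNIV. (of_int D * t i) *s rat_vec (u i))"
    by (simp add: rat_vec_sum rat_vec_scale c)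
  also have "\<dots> = of_int D *s (\<Sum>i\<in>UNIV. t i *s rat_vec (u i))"
    by (simp add: vec.scale_sum_right)
  also have "\<dots> = rat_vec 0" using assms(2) by (simp add: rat_vec_def vec_eq_iff)
  finally have "(\<Sum>i\<in>UNIV. c i *s u i) = 0" by (rule rat_vec_inj)
  then have "\<forall>i. c i = 0" using assms(1) unfolding Z_independent_def by blast
  then show ?thesis using c Dpos by (auto simp: fun_eq_iff)
qed

lemma coords_exist:
  fixes u :: "'n::finite \<Rightarrow> int ^ 'n"
  assumes "Z_independent u"
  shows "\<exists>t. is_coords u x t"
proof -
  have "inj ((*v) (Amat u))"
  proof (rule injI)
    fix a b assume "Amat u *v a = Amat u *v b"
    then have "Amat u *v (a - b) = 0" by (simp add: matrix_vector_mult_diff_distrib)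
    then have "(\<Sum>i\<in>UNIV. (\<lambda>i. (a - b) $ i) i *s rat_vec (u i)) = 0" by (simp add: Amat_mult)
    from Q_indep[OF assms this] show "a = b" by (simp add: vec_eq_iff fun_eq_iff)
  qed
  then have "surj ((*v) (Amat u))"
    by (rule vec.linear_inj_imp_surj[OF matrix_vector_mul_linear_gen])
  then obtain t where "Amat u *v t = rat_vec x" by (metis surjD)
  then show ?thesis unfolding is_coords_def by (intro exI[of _ "\<lambda>i. t $ i"]) (simp add: Amat_mult)
qed

lemma coords_unique:
  fixes u :: "'n::finite \<Rightarrow> int ^ 'n"
  assumes "Z_independent u" "is_coords u x t" "is_coords u x s"
  shows "t = s"
proof -
  have "(\<Sum>i\<in>UNIV. (t i - s i) *s rat_vec (u i)) = 0"
    using assms(2,3) unfolding is_coords_def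
    by (simp add: vec.scale_left_diff_distrib sum_subtractf)
  from Q_indep[OF assms(1) this] show ?thesis by (simp add: fun_eq_iff)
qed

lemma coords_shift:
  assumes "is_coords u x t"
  shows "is_coords u (x + (\<Sum>i\<in>UNIV. c i *s u i)) (\<lambda>i. t i + of_int (c i))"
  using assms unfolding is_coords_def
  by (simp add: rat_vec_add rat_vec_sum rat_vec_scale vec.scale_left_distrib sum.distrib)

lemma sum_diff_lin:
  fixes u :: "'n::finite \<Rightarrow> int ^ 'n"
  shows "(\<Sum>i\<in>UNIV. a i *s u i) - (\<Sum>i\<in>UNIV. b i *s u i) = (\<Sum>i\<in>UNIV. (a i - b i) *s u i)"
  by (simp add: vec_eq_iff sum_component algebra_simps sum_subtractf)

lemma sum_neg_lin:
  fixes u :: "'n::finite \<Rightarrow> int ^ 'n"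
  shows "(\<Sum>i\<in>UNIV. (- a i) *s u i) = - (\<Sum>i\<in>UNIV. a i *s u i)"
  by (simp add: vec_eq_iff sum_component sum_negf)

lemma char:
  fixes u :: "'n::finite \<Rightarrow> int ^ 'n"
  assumes Z: "Z_independent u"
  shows "is_complement (N_span u) M \<longleftrightarrow>
            (\<forall>x0 :: int ^ 'n. \<forall>N :: real. \<exists>x \<in> M. x - x0 \<in> Z_span u \<and>
                 (\<forall>t. is_coords u x t \<longrightarrow> (\<forall>i. of_rat (t i) \<le> N)))"
proof
  assume C: "is_complement (N_span u) M"
  show "\<forall>x0 (N::real). \<exists>x \<in> M. x - x0 \<in> Z_span u \<and> (\<forall>t. is_coords u x t \<longrightarrow> (\<forall>i. of_rat (t i) \<le> N))"
  proof (intro allI)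
    fix x0 :: "int ^ 'n" and N :: real
    obtain t0 where t0: "is_coords u x0 t0" using coords_exist[OF Z] by blast
    define k :: int where "k = \<lceil>(\<Sum>i\<in>UNIV. \<bar>real_of_rat (t0 i)\<bar>) + \<bar>N\<bar>\<rceil>"
    have kb: "real_of_rat (t0 i) - of_int k \<le> N" for i
    proof -
      have "real_of_rat (t0 i) \<le> \<bar>real_of_rat (t0 i)\<bar>" by (rule abs_ge_self)
      also have "\<dots> \<le> (\<Sum>i\<in>UNIV. \<bar>real_of_rat (t0 i)\<bar>)"
        by (rule member_le_sum) auto
      finally show ?thesis unfolding k_def by linarith
    qed
    define y where "y = x0 + (\<Sum>i\<in>UNIV. (\<lambda>i. - k) i *s u i)"
    have "y \<in> sumset (N_span u) M" using C unfolding is_complement_def by simp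
    then obtain p m where pm: "y = p + m" "p \<in> N_span u" "m \<in> M" unfolding sumset_def by blast
    then obtain c where c: "p = (\<Sum>i\<in>UNIV. int (c i) *s u i)" unfolding N_span_def by blast
    have me: "m = x0 + (\<Sum>i\<in>UNIV. (- k - int (c i)) *s u i)"
    proof -
      have "m = y - p" using pm by simp
      also have "\<dots> = x0 + ((\<Sum>i\<in>UNIV. (- k) *s u i) - (\<Sum>i\<in>UNIV. int (c i) *s u i))"
        unfolding y_def c by simp
      also have "\<dots> = x0 + (\<Sum>i\<in>UNIV. (- k - int (c i)) *s u i)"
        by (simp only: sum_diff_lin)
      finally show ?thesis .
    qed
    have mc: "is_coords u m (\<lambda>i. t0 i + of_int (- k - int (c i)))"
      unfolding me by (rule coords_shift[OF t0])
    show "\<exists>x \<in> M. x - x0 \<in> Z_span u \<and> (\<forall>t. is_coords u x t \<longrightarrow> (\<forall>i. of_rat (t i) \<le> N))"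
    proof (intro bexI[of _ m] conjI allI impI)
      show "m \<in> M" by fact
    next
      have "m - x0 = (\<Sum>i\<in>UNIV. (- k - int (c i)) *s u i)" using me by simp
      then show "m - x0 \<in> Z_span u" unfolding Z_span_def
        by (intro CollectI exI[of _ "\<lambda>i. - k - int (c i)"]) simp
    next
      fix t i assume "is_coords u m t"
      then have "t = (\<lambda>i. t0 i + of_int (- k - int (c i)))" using coords_unique[OF Z _ mc] by blast
      then have "real_of_rat (t i) = real_of_rat (t0 i) - of_int k - of_int (int (c i))"
        by (simp add: of_rat_add of_rat_diff of_rat_minus)
      then show "real_of_rat (t i) \<le> N" using kb[of i] by simp
    qed
  qed
next
  assume R: "\<forall>x0 (N::real). \<exists>x \<in> M. x - x0 \<in> Z_span u \<and> (\<forall>t. is_coords u x t \<longrightarrow> (\<forall>i. of_rat (t i) \<le> N))"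
  have ne: "M \<noteq> {}" using R by blast
  have "z \<in> sumset (N_span u) M" for z
  proof -
    obtain t where t: "is_coords u z t" using coords_exist[OF Z] by blast
    define N :: real where "N = - (\<Sum>i\<in>UNIV. \<bar>real_of_rat (t i)\<bar>)"
    have Nb: "N \<le> real_of_rat (t i)" for i
    proof -
      have "- real_of_rat (t i) \<le> \<bar>real_of_rat (t i)\<bar>" by (rule abs_ge_minus_self)
      also have "\<dots> \<le> (\<Sum>i\<in>UNIV. \<bar>real_of_rat (t i)\<bar>)"
        by (rule member_le_sum) auto
      finally show ?thesis unfolding N_def by linarith
    qed
    obtain x where x: "x \<in> M" "x - z \<in> Z_span u"
      and xb: "\<And>t. is_coords u x t \<Longrightarrow> (\<forall>i. of_rat (t i) \<le> N)" using R by blast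
    obtain c where c: "x - z = (\<Sum>i\<in>UNIV. c i *s u i)" using x(2) unfolding Z_span_def by blast
    have xe: "x = z + (\<Sum>i\<in>UNIV. c i *s u i)" using c by (simp add: algebra_simps)
    have "is_coords u x (\<lambda>i. t i + of_int (c i))" unfolding xe by (rule coords_shift[OF t])
    from xb[OF this] have "real_of_rat (t i) + of_int (c i) \<le> N" for i
      by (simp add: of_rat_add)
    with Nb have cn: "c i \<le> 0" for i by (smt (verit) of_int_le_0_iff)
    define p where "p = (\<Sum>i\<in>UNIV. int (nat (- c i)) *s u i)"
    have "p \<in> N_span u" unfolding p_def N_span_def
      by (intro CollectI exI[of _ "\<lambda>i. nat (- c i)"]) simp
    moreover have "p = (\<Sum>i\<in>UNIV. (- c i) *s u i)" unfolding p_def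
      by (rule sum.cong) (use cn in auto)
    then have "p = z - x" using c by (simp add: sum_neg_lin) (metis minus_diff_eq)
    ultimately show ?thesis unfolding sumset_def using x(1) by (intro CollectI exI[of _ p] exI[of _ x]) auto
  qed
  then show "is_complement (N_span u) M" unfolding is_complement_def using ne by auto
qed

theorem proposition3p3:
  fixes u :: "'n::finite \<Rightarrow> int ^ 'n"
  assumes "Z_independent u"
  shows "(\<forall>M :: (int ^ 'n) set.
            is_complement (N_span u) M \<longleftrightarrow>
            (\<forall>x0 :: int ^ 'n. \<forall>N :: real. \<exists>x \<in> M. x - x0 \<in> Z_span u \<and>
                 (\<forall>t. is_coords u x t \<longrightarrow> (\<forall>i. of_rat (t i) \<le> N))))
       \<and> (\<exists>M. is_complement (N_span u) M)
       \<and> \<not> (\<exists>M. minimal_complement (N_span u) M)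
       \<and> (\<forall>M. is_complement (N_span u) M \<longrightarrow>
              \<not> (\<exists>M' \<subseteq> M. minimal_complement (N_span u) M'))"
proof -
  have nomin: "\<not> minimal_complement (N_span u) M" for M
  proof
    assume mc: "minimal_complement (N_span u) M"
    then have C: "is_complement (N_span u) M" unfolding minimal_complement_def by blast
    then obtain m where m: "m \<in> M" unfolding is_complement_def by blast
    obtain tm where tm: "is_coords u m tm" using coords_exist[OF assms] by blast
    define i0 :: 'n where "i0 = undefined"
    have "is_complement (N_span u) (M - {m})"
      unfolding char[OF assms]
    proof (intro allI)
      fix x0 :: "int ^ 'n" and N :: real
      obtain x where x: "x \<in> M" "x - x0 \<in> Z_span u"
        and xb: "\<And>t. is_coords u x t \<Longrightarrow> (\<forall>i. of_rat (t i) \<le> min N (real_of_rat (tm i0) - 1))"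
        using C unfolding char[OF assms] by blast
      have "x \<noteq> m"
      proof
        assume "x = m"
        then have "real_of_rat (tm i0) \<le> min N (real_of_rat (tm i0) - 1)" using xb[of tm] tm by blast
        then show False by linarith
      qed
      then show "\<exists>x \<in> M - {m}. x - x0 \<in> Z_span u \<and> (\<forall>t. is_coords u x t \<longrightarrow> (\<forall>i. of_rat (t i) \<le> N))"
        using x xb by (intro bexI[of _ x]) force+
    qed
    moreover have "M - {m} \<subset> M" using m by blast
    ultimately show False using mc unfolding minimal_complement_def by blast
  qed
  have "(0::int^'n) \<in> N_span u" unfolding N_span_def
    by (intro CollectI exI[of _ "\<lambda>_. 0::nat"]) simp
  then have "x \<in> sumset (N_span u) UNIV" for x unfolding sumset_def
    by (intro CollectI exI[of _ 0] exI[of _ x]) simp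
  then have "is_complement (N_span u) UNIV" unfolding is_complement_def by auto
  then show ?thesis using char[OF assms] nomin by blast
qed

end
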